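(* Let $r,s\ge0$, let $\Delta=(v_1,\dots,v_n)$ be a collection of vectors in $\mathbb{Z}^2\setminus\{0\}$, let $F\subset\{1,\dots,n\}$ with $r+2s+|F|=|\Delta|-1$, and let $\mathcal{P}$ be a collection of conditions in general position for $\mathrm{ev}_F$. Then a curve $C\in\mathcal{M}_{(r,s)}(\Delta)$ with $\mathrm{ev}_F(C)=\mathcal{P}$ is a refined descendant curve if and only if it is an unoriented refined broccoli curve; in particular the two sets of such curves through $\mathcal{P}$ are in bijection.
   Context: Curves. An $(r,s)$-marked curve of degree $\Delta$ is $C=(\Gamma,h,x_1,\dots,x_{r+s})$ with $\Gamma$ a metric graph whose components are trees, $h:\Gamma\to\mathbb{R}^2$ continuous, affine with integral direction vectors on edges, balanced at vertices; $x_1,\dots,x_r$ (real) and $x_{r+1},\dots,x_{r+s}$ (complex) are contracted unbounded edges (markings), the other unbounded edges $y_1,\dots,y_n$ (labeled ends) have outward direction vectors $\Delta=(v(y_1),\dots,v(y_n))$. $\mathcal{M}_{(r,s)}(\Delta)$ is the polyhedral complex of isomorphism classes of connected such curves (cells = combinatorial types). $\mathrm{ev}_F(C)=(h(x_1),\dots,h(x_{r+s}),(h(y_i))_{i\in F})\in(\mathbb{R}^2)^{r+s}\times\prod_{i\in F}\mathbb{R}^2/\langle v(y_i)\rangle$; $\mathcal P$ is in general position for $\mathrm{ev}_F$ if it avoids the images of all cells whose image has dimension $<2(r+s)+|F|$. Unoriented refined broccoli curve: a curve in $\mathcal{M}_{(r,s)}(\Delta)$ each of whose vertices is (I') 3-valent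 in $\Gamma$ and adjacent to a real marking, (II') 3-valent without marking, or (III') 4-valent in $\Gamma$ and adjacent to a complex marking. Refined descendant curve: a curve in $\mathcal{M}_{(r,s)}(\Delta)$ such that each real marking is adjacent to a 3-valent vertex of $\Gamma$ and each complex marking is adjacent to a 4-valent vertex of $\Gamma$ (unmarked vertices of any valence are allowed). *)

theory Defs
  imports "HOL-Analysis.Analysis"
begin

text \<open>Parametrized rational tropical curves in the plane, given by explicit
combinatorial/metric data.  Vertices are natural numbers; bounded edges are
two-element vertex sets; markings x_i (i < r+s; real for i < r, complex for
r <= i < r+s) and labelled ends y_j (j < length Delta) are unbounded edges
attached at a vertex.  Markings are contracted; end y_j has outward direction
Delta ! j.  The image of the unbounded end y_j is the ray pos(end_at j) + R_{>=0} v_j.\<close>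

record tcurve =
  verts   :: "nat set"
  edges   :: "nat set set"
  elen    :: "nat set \<Rightarrow> real"
  pos     :: "nat \<Rightarrow> real \<times> real"
  mark_at :: "nat \<Rightarrow> nat"
  end_at  :: "nat \<Rightarrow> nat"

definition ivec :: "int \<times> int \<Rightarrow> real \<times> real" where
  "ivec v = (of_int (fst v), of_int (snd v))"

definition edir :: "tcurve \<Rightarrow> nat \<Rightarrow> nat \<Rightarrow> real \<times> real" where
  "edir C u w = (1 / elen C {u, w}) *\<^sub>R (pos C w - pos C u)"

definition nbrs :: "tcurve \<Rightarrow> nat \<Rightarrow> nat set" where
  "nbrs C u = {w. {u, w} \<in> edges C}"

definition marks_at :: "nat \<Rightarrow> tcurve \<Rightarrow> nat \<Rightarrow> nat set" where
  "marks_at m C u = {i. i < m \<and> mark_at C i = u}"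

definition ends_at :: "nat \<Rightarrow> tcurve \<Rightarrow> nat \<Rightarrow> nat set" where
  "ends_at n C u = {j. j < n \<and> end_at C j = u}"

definition valence :: "nat \<Rightarrow> nat \<Rightarrow> tcurve \<Rightarrow> nat \<Rightarrow> nat" where
  "valence m n C u = card (nbrs C u) + card (marks_at m C u) + card (ends_at n C u)"

text \<open>C is a connected (r,s)-marked curve of degree Delta, i.e. represents a
point of M_{(r,s)}(Delta).\<close>
definition is_curve :: "nat \<Rightarrow> nat \<Rightarrow> (int \<times> int) list \<Rightarrow> tcurve \<Rightarrow> bool" where
  "is_curve r s Delta C \<longleftrightarrow>
     finite (verts C) \<and> verts C \<noteq> {} \<and>
     (\<forall>e\<in>edges C. \<exists>u w. e = {u, w} \<and> u \<noteq> w \<and> u \<in> verts C \<and> w \<in> verts C) \<and>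
     (\<forall>e\<in>edges C. elen C e > 0) \<and>
     \<comment> \<open>Gamma is a tree: connected, and #edges = #vertices - 1\<close>
     (\<forall>u\<in>verts C. \<forall>w\<in>verts C. (u, w) \<in> {(a, b). {a, b} \<in> edges C}\<^sup>*) \<and>
     card (edges C) + 1 = card (verts C) \<and>
     (\<forall>i<r+s. mark_at C i \<in> verts C) \<and>
     (\<forall>j<length Delta. end_at C j \<in> verts C) \<and>
     \<comment> \<open>integral direction vectors on bounded edges\<close>
     (\<forall>u w. {u, w} \<in> edges C \<longrightarrow> (\<exists>v::int \<times> int. edir C u w = ivec v)) \<and>
     \<comment> \<open>balancing (contracted markings contribute zero)\<close>
     (\<forall>u\<in>verts C. (\<Sum>w\<in>nbrs C u. edir C u w) + (\<Sum>j\<in>ends_at (length Delta) C u. ivec (Delta ! j)) = 0) \<and>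
     \<comment> \<open>no vertices of valence 1 or 2\<close>
     (\<forall>u\<in>verts C. valence (r+s) (length Delta) C u \<ge> 3)"

definition same_type :: "nat \<Rightarrow> nat \<Rightarrow> tcurve \<Rightarrow> tcurve \<Rightarrow> bool" where
  "same_type m n C C' \<longleftrightarrow>
     (\<exists>f. bij_betw f (verts C) (verts C') \<and>
          edges C' = (\<lambda>e. f ` e) ` edges C \<and>
          (\<forall>i<m. mark_at C' i = f (mark_at C i)) \<and>
          (\<forall>j<n. end_at C' j = f (end_at C j)) \<and>
          (\<forall>u w. {u, w} \<in> edges C \<longrightarrow> edir C' (f u) (f w) = edir C u w))"

text \<open>Coordinates of the target (R^2)^{r+s} x prod_{j in F} R^2/<v_j>.
R^2/<v> is identified with R via the linear isomorphism [p] |-> det(v,p).\<close>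
datatype evcoord = MX nat | MY nat | EQ nat

definition detq :: "int \<times> int \<Rightarrow> real \<times> real \<Rightarrow> real" where
  "detq v p = of_int (fst v) * snd p - of_int (snd v) * fst p"

definition ev :: "nat \<Rightarrow> nat \<Rightarrow> (int \<times> int) list \<Rightarrow> nat set \<Rightarrow> tcurve \<Rightarrow> evcoord \<Rightarrow> real" where
  "ev r s Delta F C c = (case c of
      MX i \<Rightarrow> if i < r + s then fst (pos C (mark_at C i)) else 0
    | MY i \<Rightarrow> if i < r + s then snd (pos C (mark_at C i)) else 0
    | EQ j \<Rightarrow> if j \<in> F then detq (Delta ! j) (pos C (end_at C j)) else 0)"

definition aff_indep :: "(evcoord \<Rightarrow> real) list \<Rightarrow> bool" where
  "aff_indep ps \<longleftrightarrow> ps \<noteq> [] \<and>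
     (\<forall>c::nat \<Rightarrow> real. (\<forall>k. (\<Sum>i\<in>{1..<length ps}. c i * ((ps ! i) k - (ps ! 0) k)) = 0)
        \<longrightarrow> (\<forall>i\<in>{1..<length ps}. c i = 0))"

definition dim_less :: "(evcoord \<Rightarrow> real) set \<Rightarrow> nat \<Rightarrow> bool" where
  "dim_less S N \<longleftrightarrow> \<not> (\<exists>ps. length ps = N + 1 \<and> set ps \<subseteq> S \<and> aff_indep ps)"

definition cell_image :: "nat \<Rightarrow> nat \<Rightarrow> (int \<times> int) list \<Rightarrow> nat set \<Rightarrow> tcurve \<Rightarrow> (evcoord \<Rightarrow> real) set" where
  "cell_image r s Delta F C =
     ev r s Delta F ` {C'. is_curve r s Delta C' \<and> same_type (r+s) (length Delta) C C'}"

definition general_position :: "nat \<Rightarrow> nat \<Rightarrow> (int \<times> int) list \<Rightarrow> nat set \<Rightarrow> (evcoord \<Rightarrow> real) \<Rightarrow> bool" where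
  "general_position r s Delta F P \<longleftrightarrow>
     (\<forall>C. is_curve r s Delta C \<and> dim_less (cell_image r s Delta F C) (2 * (r + s) + card F)
          \<longrightarrow> P \<notin> cell_image r s Delta F C)"

definition has_real_mark :: "nat \<Rightarrow> tcurve \<Rightarrow> nat \<Rightarrow> bool" where
  "has_real_mark r C u \<longleftrightarrow> (\<exists>i<r. mark_at C i = u)"

definition has_cplx_mark :: "nat \<Rightarrow> nat \<Rightarrow> tcurve \<Rightarrow> nat \<Rightarrow> bool" where
  "has_cplx_mark r s C u \<longleftrightarrow> (\<exists>i. r \<le> i \<and> i < r + s \<and> mark_at C i = u)"

definition unoriented_refined_broccoli :: "nat \<Rightarrow> nat \<Rightarrow> (int \<times> int) list \<Rightarrow> tcurve \<Rightarrow> bool" where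
  "unoriented_refined_broccoli r s Delta C \<longleftrightarrow>
     (\<forall>u\<in>verts C.
        (valence (r+s) (length Delta) C u = 3 \<and> has_real_mark r C u)
      \<or> (valence (r+s) (length Delta) C u = 3 \<and> marks_at (r+s) C u = {})
      \<or> (valence (r+s) (length Delta) C u = 4 \<and> has_cplx_mark r s C u))"

definition refined_descendant :: "nat \<Rightarrow> nat \<Rightarrow> (int \<times> int) list \<Rightarrow> tcurve \<Rightarrow> bool" where
  "refined_descendant r s Delta C \<longleftrightarrow>
     (\<forall>i<r. valence (r+s) (length Delta) C (mark_at C i) = 3) \<and>
     (\<forall>i. r \<le> i \<and> i < r + s \<longrightarrow> valence (r+s) (length Delta) C (mark_at C i) = 4)"

end

theory Submission
  imports Defs "HOL-Library.Function_Algebras"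
begin


definition fscale :: "real \<Rightarrow> (evcoord \<Rightarrow> real) \<Rightarrow> evcoord \<Rightarrow> real" where
  "fscale c f = (\<lambda>k. c * f k)"

interpretation fv: vector_space fscale
  by unfold_locales (auto simp: fscale_def fun_eq_iff algebra_simps)

lemma sum_fun_apply: "(sum g A) k = (\<Sum>a\<in>A. g a k)" for g :: "'x \<Rightarrow> evcoord \<Rightarrow> real"
  by (induction A rule: infinite_finite_induct) auto

lemma dim_less_span:
  assumes fin: "finite T" and sub: "S \<subseteq> fv.span T" and lt: "card T < N"
  shows "dim_less S N"
  unfolding dim_less_def
proof
  assume "\<exists>ps. length ps = N + 1 \<and> set ps \<subseteq> S \<and> aff_indep ps"
  then obtain ps where len: "length ps = N + 1" and sps: "set ps \<subseteq> S" and ai: "aff_indep ps" by blast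
  define d where "d i = ps ! i - ps ! 0" for i
  have ind: "\<And>c. (\<forall>k. (\<Sum>i\<in>{1..<N+1}. c i * d i k) = 0) \<Longrightarrow> (\<forall>i\<in>{1..<N+1}. c i = 0)"
    using ai len unfolding aff_indep_def d_def by auto
  have inj: "inj_on d {1..<N+1}"
  proof (rule inj_onI, rule ccontr)
    fix i j assume i: "i \<in> {1..<N+1}" and j: "j \<in> {1..<N+1}" and e: "d i = d j" and ne: "i \<noteq> j"
    define c where "c l = (if l = i then 1 else if l = j then -1 else (0::real))" for l
    have "\<forall>k. (\<Sum>l\<in>{1..<N+1}. c l * d l k) = 0"
    proof
      fix k
      have "(\<Sum>l\<in>{1..<N+1}. c l * d l k) = (\<Sum>l\<in>{1..<N+1}. (if l = i then d i k else 0) - (if l = j then d j k else 0))"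
        by (rule sum.cong) (auto simp: c_def ne)
      also have "\<dots> = d i k - d j k" using i j by (simp add: sum_subtractf)
      finally show "(\<Sum>l\<in>{1..<N+1}. c l * d l k) = 0" using e by simp
    qed
    from ind[OF this] i have "c i = 0" by blast
    thus False by (simp add: c_def)
  qed
  have indep: "fv.independent (d ` {1..<N+1})"
  proof
    assume "fv.dependent (d ` {1..<N+1})"
    then obtain t u where t: "finite t" "t \<subseteq> d ` {1..<N+1}" and s0: "(\<Sum>v\<in>t. fscale (u v) v) = 0"
       and nz: "\<exists>v\<in>t. u v \<noteq> 0" unfolding fv.dependent_explicit by blast
    define c where "c l = (if d l \<in> t then u (d l) else 0)" for l
    have "\<forall>k. (\<Sum>l\<in>{1..<N+1}. c l * d l k) = 0"
    proof
      fix k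
      have "(\<Sum>l\<in>{1..<N+1}. c l * d l k) = (\<Sum>l\<in>{l\<in>{1..<N+1}. d l \<in> t}. u (d l) * d l k)"
      proof -
        have "(\<Sum>l\<in>{1..<N+1}. c l * d l k) = (\<Sum>l\<in>{1..<N+1}. if d l \<in> t then u (d l) * d l k else 0)"
          by (rule sum.cong) (auto simp: c_def)
        also have "\<dots> = (\<Sum>l\<in>{l\<in>{1..<N+1}. d l \<in> t}. u (d l) * d l k)"
          by (rule sum.inter_filter[symmetric]) simp
        finally show ?thesis .
      qed
      also have "\<dots> = (\<Sum>v\<in>t. u v * v k)"
      proof -
        have "t = d ` {l\<in>{1..<N+1}. d l \<in> t}" using t by auto
        moreover have "inj_on d {l\<in>{1..<N+1}. d l \<in> t}" using inj by (rule inj_on_subset) auto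
        ultimately show ?thesis by (metis (no_types, lifting) sum.reindex_cong)
      qed
      also have "\<dots> = (\<Sum>v\<in>t. fscale (u v) v) k" by (simp add: sum_fun_apply fscale_def)
      finally show "(\<Sum>l\<in>{1..<N+1}. c l * d l k) = 0" using s0 by simp
    qed
    from ind[OF this] have cz: "\<forall>i\<in>{1..<N+1}. c i = 0" .
    from nz obtain v where v: "v \<in> t" "u v \<noteq> 0" by blast
    then obtain i where i: "i \<in> {1..<N+1}" "v = d i" using t by blast
    from cz i(1) have "c i = 0" by blast
    with i v show False unfolding c_def by simp
  qed
  have "d ` {1..<N+1} \<subseteq> fv.span T"
  proof
    fix x assume "x \<in> d ` {1..<N+1}"
    then obtain i where i: "i \<in> {1..<N+1}" and x: "x = d i" by blast
    have "ps ! i \<in> S" "ps ! 0 \<in> S" using i len sps by (auto simp: nth_mem subsetD)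
    thus "x \<in> fv.span T" unfolding x d_def using sub by (auto intro!: fv.span_diff)
  qed
  from fv.independent_span_bound[OF fin indep this] have "card (d ` {1..<N+1}) \<le> card T" by simp
  moreover have "card (d ` {1..<N+1}) = N" using inj by (simp add: card_image)
  ultimately show False using lt by simp
qed



lemma detq_add: "detq v (p + q) = detq v p + detq v q"
  by (simp add: detq_def algebra_simps)
lemma detq_scale: "detq v (c *\<^sub>R p) = c * detq v p"
  by (simp add: detq_def algebra_simps)
lemma detq_zero: "detq v 0 = 0" by (simp add: detq_def)
lemma detq_sum: "detq v (\<Sum>e\<in>A. g e) = (\<Sum>e\<in>A. detq v (g e))"
  by (induction A rule: infinite_finite_induct) (auto simp: detq_add detq_zero)
lemma detq_split: "detq v p = fst p * detq v (1,0) + snd p * detq v (0,1)"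
  by (simp add: detq_def algebra_simps)

lemma curve_finite_edges: "is_curve r s Delta C \<Longrightarrow> finite (edges C)"
proof -
  assume c: "is_curve r s Delta C"
  have "edges C \<subseteq> Pow (verts C)" using c unfolding is_curve_def by fastforce
  thus ?thesis using c unfolding is_curve_def by (meson finite_Pow_iff finite_subset)
qed

lemma same_type_refl: "same_type m n C C"
  unfolding same_type_def by (rule exI[of _ id]) auto

lemma sum_delta_mult: "finite S \<Longrightarrow> a \<in> S \<Longrightarrow> (\<Sum>k\<in>S. g k * (if a = k then 1 else 0)) = (g a::real)"
proof -
  assume "finite S" "a \<in> S"
  have "(\<Sum>k\<in>S. g k * (if a = k then 1 else 0)) = (\<Sum>k\<in>S. if a = k then g k else 0)"
    by (rule sum.cong) auto
  also have "\<dots> = g a" using \<open>finite S\<close> \<open>a \<in> S\<close> by (simp add: sum.delta)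
  finally show ?thesis .
qed

lemma bound1:
  assumes c: "is_curve r s Delta C" and F: "F \<subseteq> {..<length Delta}"
    and lt: "card (mark_at C ` {..<r+s}) < r + s"
  shows "dim_less (cell_image r s Delta F C) (2 * (r + s) + card F)"
proof -
  define M where "M = mark_at C ` {..<r+s}"
  define eX where "eX m = (\<lambda>c. case c of MX i \<Rightarrow> if i < r+s \<and> mark_at C i = m then 1 else 0 | _ \<Rightarrow> (0::real))" for m
  define eY where "eY m = (\<lambda>c. case c of MY i \<Rightarrow> if i < r+s \<and> mark_at C i = m then 1 else 0 | _ \<Rightarrow> (0::real))" for m
  define eQ where "eQ j = (\<lambda>c. case c of EQ j' \<Rightarrow> if j' = j then 1 else 0 | _ \<Rightarrow> (0::real))" for j
  define T where "T = eX ` M \<union> eY ` M \<union> eQ ` F"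
  have ee[simp]: "eX m (MX i) = (if i < r+s \<and> mark_at C i = m then 1 else 0)" "eX m (MY i) = 0" "eX m (EQ j) = 0"
    "eY m (MY i) = (if i < r+s \<and> mark_at C i = m then 1 else 0)" "eY m (MX i) = 0" "eY m (EQ j) = 0"
    "eQ j (EQ j') = (if j' = j then 1 else 0)" "eQ j (MX i) = 0" "eQ j (MY i) = 0" for m i j j'
    by (simp_all add: eX_def eY_def eQ_def)
  have finF: "finite F" using F finite_subset by blast
  have finM: "finite M" unfolding M_def by simp
  have finT: "finite T" unfolding T_def using finF finM by simp
  have "card T \<le> card M + card M + card F"
    unfolding T_def by (meson card_Un_le card_image_le finF finM add_le_mono order_trans)
  hence cT: "card T < 2 * (r + s) + card F" using lt unfolding M_def by simp
  have "cell_image r s Delta F C \<subseteq> fv.span T"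
  proof
    fix x assume "x \<in> cell_image r s Delta F C"
    then obtain C' where C'm: "C' \<in> {C'. is_curve r s Delta C' \<and> same_type (r+s) (length Delta) C C'}"
      and x: "x = ev r s Delta F C'" unfolding cell_image_def by (rule imageE)
    from C'm have C': "is_curve r s Delta C'" "same_type (r+s) (length Delta) C C'" by simp_all
    from C'(2) obtain f where fm: "\<forall>i<r+s. mark_at C' i = f (mark_at C i)"
      unfolding same_type_def by (elim exE conjE) (rule that)
    have eq: "x = (\<Sum>m\<in>M. fscale (fst (pos C' (f m))) (eX m)) + (\<Sum>m\<in>M. fscale (snd (pos C' (f m))) (eY m))
              + (\<Sum>j\<in>F. fscale (ev r s Delta F C' (EQ j)) (eQ j))"
    proof
      fix k
      have R: "((\<Sum>m\<in>M. fscale (fst (pos C' (f m))) (eX m)) + (\<Sum>m\<in>M. fscale (snd (pos C' (f m))) (eY m))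
              + (\<Sum>j\<in>F. fscale (ev r s Delta F C' (EQ j)) (eQ j))) k
         = (\<Sum>m\<in>M. fst (pos C' (f m)) * eX m k) + (\<Sum>m\<in>M. snd (pos C' (f m)) * eY m k)
              + (\<Sum>j\<in>F. ev r s Delta F C' (EQ j) * eQ j k)"
        by (simp add: sum_fun_apply fscale_def)
      show "x k = ((\<Sum>m\<in>M. fscale (fst (pos C' (f m))) (eX m)) + (\<Sum>m\<in>M. fscale (snd (pos C' (f m))) (eY m))
              + (\<Sum>j\<in>F. fscale (ev r s Delta F C' (EQ j)) (eQ j))) k"
        unfolding R
      proof (cases k)
        case (MX i)
        show "x k = (\<Sum>m\<in>M. fst (pos C' (f m)) * eX m k) + (\<Sum>m\<in>M. snd (pos C' (f m)) * eY m k)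
              + (\<Sum>j\<in>F. ev r s Delta F C' (EQ j) * eQ j k)"
        proof (cases "i < r + s")
          case True
          have "(\<Sum>m\<in>M. fst (pos C' (f m)) * eX m k) = (\<Sum>m\<in>M. fst (pos C' (f m)) * (if mark_at C i = m then 1 else 0))"
            by (rule sum.cong) (auto simp: MX True)
          also have "\<dots> = fst (pos C' (f (mark_at C i)))"
            by (rule sum_delta_mult) (use finM True in \<open>auto simp: M_def\<close>)
          finally have "(\<Sum>m\<in>M. fst (pos C' (f m)) * eX m k) = fst (pos C' (f (mark_at C i)))" .
          moreover have "x k = fst (pos C' (f (mark_at C i)))" using True fm by (simp add: MX x ev_def)
          ultimately show ?thesis by (simp add: MX)
        next
          case False
          thus ?thesis by (simp add: MX x ev_def)
        qed
      next
        case (MY i)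
        show "x k = (\<Sum>m\<in>M. fst (pos C' (f m)) * eX m k) + (\<Sum>m\<in>M. snd (pos C' (f m)) * eY m k)
              + (\<Sum>j\<in>F. ev r s Delta F C' (EQ j) * eQ j k)"
        proof (cases "i < r + s")
          case True
          have "(\<Sum>m\<in>M. snd (pos C' (f m)) * eY m k) = (\<Sum>m\<in>M. snd (pos C' (f m)) * (if mark_at C i = m then 1 else 0))"
            by (rule sum.cong) (auto simp: MY True)
          also have "\<dots> = snd (pos C' (f (mark_at C i)))"
            by (rule sum_delta_mult) (use finM True in \<open>auto simp: M_def\<close>)
          finally have "(\<Sum>m\<in>M. snd (pos C' (f m)) * eY m k) = snd (pos C' (f (mark_at C i)))" .
          moreover have "x k = snd (pos C' (f (mark_at C i)))" using True fm by (simp add: MY x ev_def)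
          ultimately show ?thesis by (simp add: MY)
        next
          case False
          thus ?thesis by (simp add: MY x ev_def)
        qed
      next
        case (EQ j)
        show "x k = (\<Sum>m\<in>M. fst (pos C' (f m)) * eX m k) + (\<Sum>m\<in>M. snd (pos C' (f m)) * eY m k)
              + (\<Sum>j\<in>F. ev r s Delta F C' (EQ j) * eQ j k)"
        proof (cases "j \<in> F")
          case True
          have "(\<Sum>j'\<in>F. ev r s Delta F C' (EQ j') * eQ j' k) = ev r s Delta F C' (EQ j)"
            using True finF by (simp add: EQ sum_delta_mult)
          thus ?thesis by (simp add: EQ x)
        next
          case False
          have "(\<Sum>j'\<in>F. ev r s Delta F C' (EQ j') * eQ j' k) = 0"
            using False by (intro sum.neutral) (auto simp: EQ)
          thus ?thesis using False by (simp add: EQ x ev_def)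
        qed
      qed
    qed
    show "x \<in> fv.span T" unfolding eq
      by (intro fv.span_add fv.span_sum fv.span_scale fv.span_base) (auto simp: T_def)
  qed
  thus ?thesis by (rule dim_less_span[OF finT _ cT])
qed




definition tparam :: "tcurve \<Rightarrow> nat \<Rightarrow> nat \<Rightarrow> (nat set \<Rightarrow> real \<times> real) \<Rightarrow> bool" where
  "tparam C v0 u W \<longleftrightarrow> (\<forall>C' f. (\<forall>e\<in>edges C'. elen C' e > 0) \<longrightarrow> edges C' = (\<lambda>e. f ` e) ` edges C \<longrightarrow>
      (\<forall>a b. {a, b} \<in> edges C \<longrightarrow> edir C' (f a) (f b) = edir C a b) \<longrightarrow>
      pos C' (f u) = pos C' (f v0) + (\<Sum>e\<in>edges C. elen C' (f ` e) *\<^sub>R W e))"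

lemma path_param:
  assumes fin: "finite (edges C)" and p: "(v0, u) \<in> {(a, b). {a, b} \<in> edges C}\<^sup>*"
  shows "\<exists>W. tparam C v0 u W"
  using p
proof (induction rule: rtrancl_induct)
  case base
  show ?case by (rule exI[of _ "\<lambda>_. 0"]) (simp add: tparam_def)
next
  case (step a b)
  from step.IH obtain W where W: "tparam C v0 a W" by blast
  have ab: "{a, b} \<in> edges C" using step.hyps(2) by simp
  define W' where "W' e = W e + (if e = {a, b} then edir C a b else 0)" for e
  have "tparam C v0 b W'"
    unfolding tparam_def
  proof (intro allI impI)
    fix C' f
    assume el: "\<forall>e\<in>edges C'. elen C' e > 0" and ed: "edges C' = (\<lambda>e. f ` e) ` edges C"
      and dir: "\<forall>a b. {a, b} \<in> edges C \<longrightarrow> edir C' (f a) (f b) = edir C a b"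
    have pa: "pos C' (f a) = pos C' (f v0) + (\<Sum>e\<in>edges C. elen C' (f ` e) *\<^sub>R W e)"
      using W[unfolded tparam_def, rule_format, OF el[rule_format] ed dir[rule_format]] .
    have "f ` {a, b} \<in> edges C'" unfolding ed by (rule imageI[OF ab])
    hence fab: "{f a, f b} \<in> edges C'" by simp
    hence lpos: "elen C' {f a, f b} > 0" using el by (rule bspec[rotated])
    have dd: "edir C' (f a) (f b) = edir C a b" using dir ab by blast
    have "elen C' {f a, f b} *\<^sub>R edir C' (f a) (f b) = pos C' (f b) - pos C' (f a)"
      using lpos by (simp add: edir_def)
    hence "elen C' {f a, f b} *\<^sub>R edir C a b = pos C' (f b) - pos C' (f a)" unfolding dd .
    hence pb: "pos C' (f b) = pos C' (f a) + elen C' {f a, f b} *\<^sub>R edir C a b" by (simp add: algebra_simps)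
    have "(\<Sum>e\<in>edges C. elen C' (f ` e) *\<^sub>R W' e)
        = (\<Sum>e\<in>edges C. elen C' (f ` e) *\<^sub>R W e) + (\<Sum>e\<in>edges C. if e = {a, b} then elen C' (f ` e) *\<^sub>R edir C a b else 0)"
    proof -
      have "(\<Sum>e\<in>edges C. elen C' (f ` e) *\<^sub>R W' e) = (\<Sum>e\<in>edges C. elen C' (f ` e) *\<^sub>R W e + (if e = {a, b} then elen C' (f ` e) *\<^sub>R edir C a b else 0))"
        by (rule sum.cong) (auto simp: W'_def scaleR_add_right)
      also have "\<dots> = (\<Sum>e\<in>edges C. elen C' (f ` e) *\<^sub>R W e) + (\<Sum>e\<in>edges C. if e = {a, b} then elen C' (f ` e) *\<^sub>R edir C a b else 0)"
        by (rule sum.distrib)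
      finally show ?thesis .
    qed
    also have "(\<Sum>e\<in>edges C. if e = {a, b} then elen C' (f ` e) *\<^sub>R edir C a b else 0) = elen C' {f a, f b} *\<^sub>R edir C a b"
      using fin ab by (simp add: sum.delta')
    finally show "pos C' (f b) = pos C' (f v0) + (\<Sum>e\<in>edges C. elen C' (f ` e) *\<^sub>R W' e)"
      using pa pb by (simp add: algebra_simps)
  qed
  thus ?case by blast
qed

lemma bound2:
  assumes c: "is_curve r s Delta C" and F: "F \<subseteq> {..<length Delta}"
    and lt: "card (edges C) + 2 < N"
  shows "dim_less (cell_image r s Delta F C) N"
proof -
  have finE: "finite (edges C)" using c by (rule curve_finite_edges)
  have ne: "verts C \<noteq> {}" using c unfolding is_curve_def by blast
  then obtain v0 where v0: "v0 \<in> verts C" by blast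
  have conn: "\<forall>u\<in>verts C. \<forall>w\<in>verts C. (u, w) \<in> {(a, b). {a, b} \<in> edges C}\<^sup>*"
    using c unfolding is_curve_def by blast
  have "\<forall>u\<in>verts C. \<exists>W. tparam C v0 u W"
  proof
    fix u assume u: "u \<in> verts C"
    show "\<exists>W. tparam C v0 u W" by (rule path_param[OF finE conn[rule_format, OF v0 u]])
  qed
  from bchoice[OF this] obtain WW where WW: "\<forall>u\<in>verts C. tparam C v0 u (WW u)" by blast
  have mv: "\<forall>i<r+s. mark_at C i \<in> verts C" and ev': "\<forall>j<length Delta. end_at C j \<in> verts C"
    using c unfolding is_curve_def by blast+
  define EX0 where "EX0 = (\<lambda>c. case c of MX i \<Rightarrow> if i < r+s then 1 else 0 | MY i \<Rightarrow> 0
      | EQ j \<Rightarrow> if j \<in> F then detq (Delta ! j) (1, 0) else (0::real))"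
  define EY0 where "EY0 = (\<lambda>c. case c of MX i \<Rightarrow> 0 | MY i \<Rightarrow> if i < r+s then 1 else 0
      | EQ j \<Rightarrow> if j \<in> F then detq (Delta ! j) (0, 1) else (0::real))"
  define B where "B e = (\<lambda>c. case c of MX i \<Rightarrow> if i < r+s then fst (WW (mark_at C i) e) else 0
      | MY i \<Rightarrow> if i < r+s then snd (WW (mark_at C i) e) else 0
      | EQ j \<Rightarrow> if j \<in> F then detq (Delta ! j) (WW (end_at C j) e) else (0::real))" for e
  define T where "T = insert EX0 (insert EY0 (B ` edges C))"
  have finT: "finite T" unfolding T_def using finE by simp
  have c1: "card (insert EY0 (B ` edges C)) \<le> Suc (card (B ` edges C))"
    using finE by (simp add: card_insert_if)
  have "card T \<le> Suc (card (insert EY0 (B ` edges C)))" unfolding T_def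
    using finE by (simp add: card_insert_if)
  hence "card T \<le> Suc (Suc (card (B ` edges C)))" using c1 by linarith
  hence cT: "card T < N" using lt card_image_le[OF finE, of B] by linarith
  have "cell_image r s Delta F C \<subseteq> fv.span T"
  proof
    fix x assume "x \<in> cell_image r s Delta F C"
    then obtain C' where C'm: "C' \<in> {C'. is_curve r s Delta C' \<and> same_type (r+s) (length Delta) C C'}"
      and x: "x = ev r s Delta F C'" unfolding cell_image_def by (rule imageE)
    from C'm have C': "is_curve r s Delta C'" "same_type (r+s) (length Delta) C C'" by simp_all
    from C'(2) obtain f where ed: "edges C' = (\<lambda>e. f ` e) ` edges C"
      and fm: "\<forall>i<r+s. mark_at C' i = f (mark_at C i)"
      and fe: "\<forall>j<length Delta. end_at C' j = f (end_at C j)"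
      and dir: "\<forall>u w. {u, w} \<in> edges C \<longrightarrow> edir C' (f u) (f w) = edir C u w"
      unfolding same_type_def by (elim exE conjE) (rule that)
    have el: "\<forall>e\<in>edges C'. elen C' e > 0" using C'(1) unfolding is_curve_def by blast
    define p0 where "p0 = pos C' (f v0)"
    define l where "l e = elen C' (f ` e)" for e
    have pu: "pos C' (f u) = p0 + (\<Sum>e\<in>edges C. l e *\<^sub>R WW u e)" if "u \<in> verts C" for u
      unfolding p0_def l_def using WW[rule_format, OF that, unfolded tparam_def, rule_format, OF el[rule_format] ed dir[rule_format]] .
    have eq: "x = fscale (fst p0) EX0 + fscale (snd p0) EY0 + (\<Sum>e\<in>edges C. fscale (l e) (B e))"
    proof
      fix k
      have R: "(fscale (fst p0) EX0 + fscale (snd p0) EY0 + (\<Sum>e\<in>edges C. fscale (l e) (B e))) k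
          = fst p0 * EX0 k + snd p0 * EY0 k + (\<Sum>e\<in>edges C. l e * B e k)"
        by (simp add: sum_fun_apply fscale_def)
      show "x k = (fscale (fst p0) EX0 + fscale (snd p0) EY0 + (\<Sum>e\<in>edges C. fscale (l e) (B e))) k"
        unfolding R
      proof (cases k)
        case (MX i)
        show "x k = fst p0 * EX0 k + snd p0 * EY0 k + (\<Sum>e\<in>edges C. l e * B e k)"
        proof (cases "i < r + s")
          case True
          have "x k = fst (pos C' (f (mark_at C i)))" using True fm by (simp add: MX x ev_def)
          also have "\<dots> = fst p0 + (\<Sum>e\<in>edges C. l e * fst (WW (mark_at C i) e))"
            using pu[of "mark_at C i"] mv True by (simp add: fst_sum)
          finally show ?thesis using True by (simp add: MX EX0_def EY0_def B_def)
        qed (simp add: MX x ev_def EX0_def EY0_def B_def)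
      next
        case (MY i)
        show "x k = fst p0 * EX0 k + snd p0 * EY0 k + (\<Sum>e\<in>edges C. l e * B e k)"
        proof (cases "i < r + s")
          case True
          have "x k = snd (pos C' (f (mark_at C i)))" using True fm by (simp add: MY x ev_def)
          also have "\<dots> = snd p0 + (\<Sum>e\<in>edges C. l e * snd (WW (mark_at C i) e))"
            using pu[of "mark_at C i"] mv True by (simp add: snd_sum)
          finally show ?thesis using True by (simp add: MY EX0_def EY0_def B_def)
        qed (simp add: MY x ev_def EX0_def EY0_def B_def)
      next
        case (EQ j)
        show "x k = fst p0 * EX0 k + snd p0 * EY0 k + (\<Sum>e\<in>edges C. l e * B e k)"
        proof (cases "j \<in> F")
          case True
          have jl: "j < length Delta" using True F by blast
          have "x k = detq (Delta ! j) (pos C' (f (end_at C j)))" using True jl fe by (simp add: EQ x ev_def)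
          also have "\<dots> = detq (Delta ! j) p0 + (\<Sum>e\<in>edges C. l e * detq (Delta ! j) (WW (end_at C j) e))"
            using pu[of "end_at C j"] ev' jl by (simp add: detq_add detq_sum detq_scale)
          also have "detq (Delta ! j) p0 = fst p0 * detq (Delta ! j) (1, 0) + snd p0 * detq (Delta ! j) (0, 1)"
            by (rule detq_split)
          finally show ?thesis using True by (simp add: EQ EX0_def EY0_def B_def)
        qed (simp add: EQ x ev_def EX0_def EY0_def B_def)
      qed
    qed
    show "x \<in> fv.span T" unfolding eq
      by (intro fv.span_add fv.span_sum fv.span_scale fv.span_base) (auto simp: T_def)
  qed
  thus ?thesis by (rule dim_less_span[OF finT _ cT])
qed




lemma sigma_card_bound:
  assumes "finite A" "\<forall>a\<in>A. finite (B a)" "inj_on g (Sigma A B)" "g ` Sigma A B \<subseteq> D" "finite D"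
  shows "(\<Sum>a\<in>A. card (B a)) \<le> card D"
proof -
  have "(\<Sum>a\<in>A. card (B a)) = card (Sigma A B)" using assms(1,2) by (simp add: card_SigmaI)
  also have "\<dots> \<le> card D" by (rule card_inj_on_le[OF assms(3,4,5)])
  finally show ?thesis .
qed

lemma handshake:
  assumes c: "is_curve r s Delta C"
  shows "(\<Sum>u\<in>verts C. valence (r+s) (length Delta) C u) \<le> 2 * card (edges C) + (r + s) + length Delta"
proof -
  have finV: "finite (verts C)" using c unfolding is_curve_def by blast
  have finE: "finite (edges C)" using c by (rule curve_finite_edges)
  have edg: "\<forall>e\<in>edges C. \<exists>u w. e = {u, w} \<and> u \<noteq> w \<and> u \<in> verts C \<and> w \<in> verts C"
    using c unfolding is_curve_def by blast
  have nbV: "nbrs C u \<subseteq> verts C" for u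
  proof
    fix w assume "w \<in> nbrs C u"
    hence "{u, w} \<in> edges C" by (simp add: nbrs_def)
    with edg obtain a b where "{u, w} = {a, b}" "a \<in> verts C" "b \<in> verts C" by blast
    thus "w \<in> verts C" by (auto simp: doubleton_eq_iff)
  qed
  have nbne: "u \<noteq> w" if "w \<in> nbrs C u" for u w
  proof -
    have "{u, w} \<in> edges C" using that by (simp add: nbrs_def)
    with edg obtain a b where "{u, w} = {a, b}" "a \<noteq> b" by blast
    thus ?thesis by (auto simp: doubleton_eq_iff)
  qed
  have s1: "(\<Sum>u\<in>verts C. card (nbrs C u)) \<le> card (edges C \<times> (UNIV :: bool set))"
  proof (rule sigma_card_bound[where g = "\<lambda>(u, w). ({u, w}, u < w)"])
    show "finite (verts C)" by (rule finV)
    show "\<forall>a\<in>verts C. finite (nbrs C a)" using finV nbV finite_subset by blast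
    show "inj_on (\<lambda>(u, w). ({u, w}, u < w)) (Sigma (verts C) (nbrs C))"
    proof (rule inj_onI, clarify)
      fix u w u' w' assume w: "w \<in> nbrs C u" and w': "w' \<in> nbrs C u'"
        and e: "{u, w} = {u', w'}" and o: "(u < w) = (u' < w')"
      have "u \<noteq> w" using nbne w by blast
      with e o show "u = u' \<and> w = w'" by (auto simp: doubleton_eq_iff)
    qed
    show "(\<lambda>(u, w). ({u, w}, u < w)) ` Sigma (verts C) (nbrs C) \<subseteq> edges C \<times> UNIV"
      by (auto simp: nbrs_def)
    show "finite (edges C \<times> (UNIV :: bool set))" using finE by simp
  qed
  have s2: "(\<Sum>u\<in>verts C. card (marks_at (r+s) C u)) \<le> card {..<r+s}"
  proof (rule sigma_card_bound[where g = snd])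
    show "finite (verts C)" by (rule finV)
    show "\<forall>a\<in>verts C. finite (marks_at (r+s) C a)" by (simp add: marks_at_def)
    show "inj_on snd (Sigma (verts C) (marks_at (r+s) C))"
      by (rule inj_onI) (auto simp: marks_at_def)
    show "snd ` Sigma (verts C) (marks_at (r+s) C) \<subseteq> {..<r+s}" by (auto simp: marks_at_def)
  qed simp
  have s3: "(\<Sum>u\<in>verts C. card (ends_at (length Delta) C u)) \<le> card {..<length Delta}"
  proof (rule sigma_card_bound[where g = snd])
    show "finite (verts C)" by (rule finV)
    show "\<forall>a\<in>verts C. finite (ends_at (length Delta) C a)" by (simp add: ends_at_def)
    show "inj_on snd (Sigma (verts C) (ends_at (length Delta) C))"
      by (rule inj_onI) (auto simp: ends_at_def)
    show "snd ` Sigma (verts C) (ends_at (length Delta) C) \<subseteq> {..<length Delta}" by (auto simp: ends_at_def)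
  qed simp
  have "(\<Sum>u\<in>verts C. valence (r+s) (length Delta) C u) = (\<Sum>u\<in>verts C. card (nbrs C u))
     + (\<Sum>u\<in>verts C. card (marks_at (r+s) C u)) + (\<Sum>u\<in>verts C. card (ends_at (length Delta) C u))"
    by (simp add: valence_def sum.distrib)
  thus ?thesis using s1 s2 s3 finE by (simp add: card_cartesian_product)
qed

theorem lemma3p21:
  fixes r s :: nat and Delta :: "(int \<times> int) list" and F :: "nat set"
    and P :: "evcoord \<Rightarrow> real"
  assumes "\<forall>v\<in>set Delta. v \<noteq> (0, 0)"
    and "F \<subseteq> {..<length Delta}"
    and "r + 2 * s + card F + 1 = length Delta"
    and "general_position r s Delta F P"
  shows "\<forall>C. is_curve r s Delta C \<and> ev r s Delta F C = P \<longrightarrow>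
           (refined_descendant r s Delta C \<longleftrightarrow> unoriented_refined_broccoli r s Delta C)"
proof (intro allI impI)
  fix C assume a: "is_curve r s Delta C \<and> ev r s Delta F C = P"
  have c: "is_curve r s Delta C" using a by blast
  have evP: "ev r s Delta F C = P" using a by blast
  have "C \<in> {C'. is_curve r s Delta C' \<and> same_type (r+s) (length Delta) C C'}"
    using c same_type_refl by simp
  hence "ev r s Delta F C \<in> cell_image r s Delta F C" unfolding cell_image_def by (rule imageI)
  hence PinC: "P \<in> cell_image r s Delta F C" using evP by simp
  have ndl: "\<not> dim_less (cell_image r s Delta F C) (2 * (r + s) + card F)"
    using assms(4) c PinC unfolding general_position_def by blast
  have "\<not> card (mark_at C ` {..<r+s}) < r + s"
    using bound1[OF c assms(2)] ndl by blast
  moreover have "card (mark_at C ` {..<r+s}) \<le> r + s" using card_image_le[of "{..<r+s}" "mark_at C"] by simp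
  ultimately have "card (mark_at C ` {..<r+s}) = card {..<r+s}" by simp
  hence inj: "inj_on (mark_at C) {..<r+s}" by (rule eq_card_imp_inj_on[rotated]) simp
  have E2: "\<not> card (edges C) + 2 < 2 * (r + s) + card F"
    using bound2[OF c assms(2)] ndl by blast
  have finV: "finite (verts C)" using c unfolding is_curve_def by blast
  have EV: "card (edges C) + 1 = card (verts C)" using c unfolding is_curve_def by blast
  have mv: "\<forall>i<r+s. mark_at C i \<in> verts C" using c unfolding is_curve_def by blast
  have v3: "\<forall>u\<in>verts C. valence (r+s) (length Delta) C u \<ge> 3" using c unfolding is_curve_def by blast
  have HS: "(\<Sum>u\<in>verts C. valence (r+s) (length Delta) C u) \<le> 2 * card (edges C) + (r + s) + length Delta"
    by (rule handshake[OF c])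
  show "refined_descendant r s Delta C \<longleftrightarrow> unoriented_refined_broccoli r s Delta C"
  proof
    assume d: "refined_descendant r s Delta C"
    have d1: "\<forall>i<r. valence (r+s) (length Delta) C (mark_at C i) = 3"
      and d2: "\<forall>i. r \<le> i \<and> i < r + s \<longrightarrow> valence (r+s) (length Delta) C (mark_at C i) = 4"
      using d unfolding refined_descendant_def by blast+
    show "unoriented_refined_broccoli r s Delta C"
      unfolding unoriented_refined_broccoli_def
    proof
      fix u assume uV: "u \<in> verts C"
      show "(valence (r+s) (length Delta) C u = 3 \<and> has_real_mark r C u)
      \<or> (valence (r+s) (length Delta) C u = 3 \<and> marks_at (r+s) C u = {})
      \<or> (valence (r+s) (length Delta) C u = 4 \<and> has_cplx_mark r s C u)"
      proof (cases "\<exists>i<r+s. mark_at C i = u")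
        case True
        then obtain i where i: "i < r + s" "mark_at C i = u" by blast
        show ?thesis
        proof (cases "i < r")
          case True
          thus ?thesis using d1 i unfolding has_real_mark_def by blast
        next
          case False
          thus ?thesis using d2 i unfolding has_cplx_mark_def by (metis not_le)
        qed
      next
        case False
        hence mu: "marks_at (r+s) C u = {}" unfolding marks_at_def by blast
        have "valence (r+s) (length Delta) C u = 3"
        proof (rule ccontr)
          assume "valence (r+s) (length Delta) C u \<noteq> 3"
          hence u4: "valence (r+s) (length Delta) C u \<ge> 4" using v3 uV by fastforce
          define K where "K = mark_at C ` {r..<r+s}"
          have KV: "K \<subseteq> verts C" unfolding K_def using mv by auto
          have "inj_on (mark_at C) {r..<r+s}" using inj by (rule inj_on_subset) auto
          hence cK: "card K = s" unfolding K_def by (simp add: card_image)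
          have uK: "u \<notin> K" using False unfolding K_def by auto
          have "(\<Sum>w\<in>verts C. 3 + (if w \<in> K then 1 else 0) + (if w = u then 1 else 0))
                \<le> (\<Sum>w\<in>verts C. valence (r+s) (length Delta) C w)"
          proof (rule sum_mono)
            fix w assume wV: "w \<in> verts C"
            show "3 + (if w \<in> K then 1 else 0) + (if w = u then 1 else 0) \<le> valence (r+s) (length Delta) C w"
            proof (cases "w \<in> K")
              case True
              then obtain i where "i \<in> {r..<r+s}" "w = mark_at C i" unfolding K_def by blast
              hence "valence (r+s) (length Delta) C w = 4" using d2 by auto
              thus ?thesis using True uK by auto
            next
              case False
              thus ?thesis using u4 v3 wV by auto
            qed
          qed
          moreover have "(\<Sum>w\<in>verts C. 3 + (if w \<in> K then 1 else 0) + (if w = u then 1 else (0::nat)))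
               = 3 * card (verts C) + card K + 1"
          proof -
            have "(\<Sum>w\<in>verts C. (if w \<in> K then 1 else (0::nat))) = card (verts C \<inter> K)"
              using sum.inter_restrict[OF finV, of "\<lambda>_. 1::nat" K] by simp
            moreover have "verts C \<inter> K = K" using KV by blast
            ultimately show ?thesis using finV uV by (simp add: sum.distrib)
          qed
          ultimately have L: "3 * card (verts C) + card K + 1 \<le> (\<Sum>w\<in>verts C. valence (r+s) (length Delta) C w)"
            by linarith
          have "3 * card (verts C) + card K + 1 \<le> 2 * card (edges C) + (r + s) + length Delta"
            using L HS by (rule order_trans)
          thus False using cK EV E2 assms(3) by presburger
        qed
        thus ?thesis using mu by blast
      qed
    qed
  next
    assume b: "unoriented_refined_broccoli r s Delta C"
    have bb: "\<And>u. u \<in> verts C \<Longrightarrow> (valence (r+s) (length Delta) C u = 3 \<and> has_real_mark r C u)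
      \<or> (valence (r+s) (length Delta) C u = 3 \<and> marks_at (r+s) C u = {})
      \<or> (valence (r+s) (length Delta) C u = 4 \<and> has_cplx_mark r s C u)"
      using b unfolding unoriented_refined_broccoli_def by blast
    show "refined_descendant r s Delta C"
      unfolding refined_descendant_def
    proof (intro conjI allI impI)
      fix i assume i: "i < r"
      hence ir: "i < r + s" by simp
      have nm: "marks_at (r+s) C (mark_at C i) \<noteq> {}" using ir unfolding marks_at_def by blast
      have nc: "\<not> has_cplx_mark r s C (mark_at C i)"
      proof
        assume "has_cplx_mark r s C (mark_at C i)"
        then obtain j where j: "r \<le> j" "j < r + s" "mark_at C j = mark_at C i" unfolding has_cplx_mark_def by blast
        hence "j = i" using inj ir by (auto dest: inj_onD)
        thus False using j i by simp
      qed
      show "valence (r+s) (length Delta) C (mark_at C i) = 3"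
        using bb[of "mark_at C i"] mv ir nm nc by blast
    next
      fix i assume i: "r \<le> i \<and> i < r + s"
      hence ir: "i < r + s" by simp
      have nm: "marks_at (r+s) C (mark_at C i) \<noteq> {}" using ir unfolding marks_at_def by blast
      have nr: "\<not> has_real_mark r C (mark_at C i)"
      proof
        assume "has_real_mark r C (mark_at C i)"
        then obtain j where j: "j < r" "mark_at C j = mark_at C i" unfolding has_real_mark_def by blast
        hence "j = i" using inj ir by (auto dest: inj_onD)
        thus False using j i by simp
      qed
      show "valence (r+s) (length Delta) C (mark_at C i) = 4"
        using bb[of "mark_at C i"] mv ir nm nr by blast
    qed
  qed
qed


end
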